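(* Let $\theta\in\mathbb{R}$ with $\omega_0:=\cos\theta\neq 0$, and put $\gamma=\sin\theta$. Let $|u_1\rangle=\tfrac{1}{\sqrt2}\begin{pmatrix}1\\1\end{pmatrix}$, $|u_2\rangle=\tfrac{1}{\sqrt2}\begin{pmatrix}1\\-1\end{pmatrix}$, let $T=\cos\tfrac{\theta}{2}\,\mathbf 1_2-2\sin\tfrac{\theta}{2}\,\sigma_2$, and let $|\phi_j\rangle=\omega_0T|u_j\rangle$, $|\chi_j\rangle=(T^{-1})^{\dagger}|u_j\rangle$. For $m=1,2,3$ define the $2\times2$ matrices $$\sigma_m^{\gamma}=\frac{i^{m+1}}{2}\sum_{j,k=1}^{2}\frac{c^{(m)}_{jk}}{\omega_0^{\delta_{m2}}}\,|\phi_j\rangle\langle\chi_k|.$$ Then for all $l,m\in\{1,2,3\}$, $$[\sigma_l^{\gamma},\sigma_m^{\gamma}]=i\sum_{n=1}^{3}\epsilon_{lmn}\,(1-\gamma^2\delta_{n2})\,\sigma_n^{\gamma}.$$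
   Context: Here $\langle\chi_k|$ is the conjugate transpose of $|\chi_k\rangle$, $\dagger$ is conjugate transpose, $\sigma_2=\tfrac12\begin{pmatrix}0&-i\\ i&0\end{pmatrix}$, $\epsilon_{lmn}$ is the Levi-Civita symbol and $\delta$ the Kronecker delta. The coefficient matrices are $c^{(m)}=(c^{(m)}_{jk})_{j,k=1,2}$ with $c^{(1)}_{jk}=(-1)^j\delta_{jk}$, $c^{(3)}_{jk}=1-(-1)^jc^{(1)}_{jk}$ and $c^{(2)}_{jk}=(-1)^jc^{(3)}_{jk}$, i.e. $c^{(1)}=\begin{pmatrix}-1&0\\0&1\end{pmatrix}$, $c^{(2)}=\begin{pmatrix}0&-1\\1&0\end{pmatrix}$, $c^{(3)}=\begin{pmatrix}0&1\\1&0\end{pmatrix}$. *)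

theory Defs
  imports "HOL-Analysis.Analysis"
begin

(* 2x2 complex matrices are complex^2^2, vectors complex^2; entries listed with vector [..]
   so that vector index 1 is the first component and 2 the second. *)

definition cmat_scale :: "complex \<Rightarrow> complex^2^2 \<Rightarrow> complex^2^2" where
  "cmat_scale c A = (\<chi> i j. c * A $ i $ j)"

definition conj_transpose :: "complex^2^2 \<Rightarrow> complex^2^2" where
  "conj_transpose A = (\<chi> i j. cnj (A $ j $ i))"

definition ket_bra :: "complex^2 \<Rightarrow> complex^2 \<Rightarrow> complex^2^2" where
  "ket_bra x y = (\<chi> i j. x $ i * cnj (y $ j))"

definition commutator :: "complex^2^2 \<Rightarrow> complex^2^2 \<Rightarrow> complex^2^2" where
  "commutator A B = A ** B - B ** A"

definition kdelta :: "nat \<Rightarrow> nat \<Rightarrow> complex" where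
  "kdelta a b = (if a = b then 1 else 0)"

definition levi_civita :: "nat \<Rightarrow> nat \<Rightarrow> nat \<Rightarrow> complex" where
  "levi_civita l m n =
     (if (l,m,n) \<in> {(1,2,3),(2,3,1),(3,1,2)} then 1
      else if (l,m,n) \<in> {(1,3,2),(3,2,1),(2,1,3)} then -1 else 0)"

definition sigma2 :: "complex^2^2" where
  "sigma2 = cmat_scale (1/2) (vector [vector [0, -\<i>], vector [\<i>, 0]])"

definition c1 :: "nat \<Rightarrow> nat \<Rightarrow> complex" where
  "c1 j k = (-1) ^ j * kdelta j k"
definition c3 :: "nat \<Rightarrow> nat \<Rightarrow> complex" where
  "c3 j k = 1 - (-1) ^ j * c1 j k"
definition c2 :: "nat \<Rightarrow> nat \<Rightarrow> complex" where
  "c2 j k = (-1) ^ j * c3 j k"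
definition coef :: "nat \<Rightarrow> nat \<Rightarrow> nat \<Rightarrow> complex" where
  "coef m j k = (if m = 1 then c1 j k else if m = 2 then c2 j k else c3 j k)"

definition u_vec :: "nat \<Rightarrow> complex^2" where
  "u_vec j = (if j = 1 then vector [complex_of_real (1 / sqrt 2), complex_of_real (1 / sqrt 2)]
              else vector [complex_of_real (1 / sqrt 2), - complex_of_real (1 / sqrt 2)])"

definition T_mat :: "real \<Rightarrow> complex^2^2" where
  "T_mat \<theta> = cmat_scale (complex_of_real (cos (\<theta>/2))) (mat 1)
              - cmat_scale (complex_of_real (2 * sin (\<theta>/2))) sigma2"

definition phi_vec :: "real \<Rightarrow> nat \<Rightarrow> complex^2" where
  "phi_vec \<theta> j = complex_of_real (cos \<theta>) *s (T_mat \<theta> *v u_vec j)"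

definition chi_vec :: "real \<Rightarrow> nat \<Rightarrow> complex^2" where
  "chi_vec \<theta> j = conj_transpose (matrix_inv (T_mat \<theta>)) *v u_vec j"

definition sigma_gamma :: "real \<Rightarrow> nat \<Rightarrow> complex^2^2" where
  "sigma_gamma \<theta> m =
     cmat_scale (\<i> ^ (m + 1) / 2)
       (\<Sum>j\<in>{1,2::nat}. \<Sum>k\<in>{1,2::nat}.
          cmat_scale (coef m j k / complex_of_real (cos \<theta>) ^ (if m = 2 then 1 else 0))
            (ket_bra (phi_vec \<theta> j) (chi_vec \<theta> k)))"

end

theory Submission
  imports Defs
begin

lemma matrix_inv_eq:
  fixes A B :: "'a::comm_ring_1^'n^'n"
  assumes "A ** B = mat 1" "B ** A = mat 1"
  shows "matrix_inv A = B"
proof -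
  have "\<exists>A'. A ** A' = mat 1 \<and> A' ** A = mat 1" using assms by blast
  then have h: "A ** matrix_inv A = mat 1 \<and> matrix_inv A ** A = mat 1"
    unfolding matrix_inv_def by (rule someI_ex)
  have "matrix_inv A = matrix_inv A ** (A ** B)" using assms by (simp add: matrix_mul_rid)
  also have "\<dots> = B" using h by (simp add: matrix_mul_assoc matrix_mul_lid)
  finally show ?thesis .
qed

lemma cplx_ids:
  fixes \<theta> :: real
  defines "C \<equiv> complex_of_real (cos (\<theta>/2))" and "S \<equiv> complex_of_real (sin (\<theta>/2))"
  shows "C^2 + S^2 = 1" "complex_of_real (cos \<theta>) = C^2 - S^2" "complex_of_real (sin \<theta>) = 2 * C * S"
proof -
  have "cos \<theta> = cos (2*(\<theta>/2))" "sin \<theta> = sin (2*(\<theta>/2))" by simp_all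
  then have a: "cos \<theta> = cos (\<theta>/2)^2 - sin (\<theta>/2)^2" "sin \<theta> = 2 * sin (\<theta>/2) * cos (\<theta>/2)"
    by (simp_all only: cos_double sin_double)
  show "C^2 + S^2 = 1" unfolding C_def S_def
    by (metis of_real_1 of_real_add of_real_power sin_cos_squared_add2)
  show "complex_of_real (cos \<theta>) = C^2 - S^2" unfolding C_def S_def a by simp
  show "complex_of_real (sin \<theta>) = 2 * C * S" unfolding C_def S_def a by simp
qed

lemma T_eq: "T_mat \<theta> = vector[vector[complex_of_real (cos (\<theta>/2)), \<i> * complex_of_real (sin (\<theta>/2))],
   vector[- \<i> * complex_of_real (sin (\<theta>/2)), complex_of_real (cos (\<theta>/2))]]"
  unfolding T_mat_def sigma2_def cmat_scale_def
  by (simp add: vec_eq_iff forall_2 mat_def)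

lemma ii: "\<i> * S * (\<i> * S) = - (S * S)" "\<i> * S * (- \<i> * S) = S * S" "- \<i> * S * (\<i> * S) = S * S"
  using i_squared by algebra+

lemma inv_abs:
  fixes C S :: complex
  assumes "C^2 - S^2 \<noteq> 0"
  shows "matrix_inv (vector[vector[C, \<i> * S], vector[- \<i> * S, C]] :: complex^2^2)
     = vector[vector[C/(C^2 - S^2), - \<i> * S/(C^2 - S^2)], vector[\<i> * S/(C^2 - S^2), C/(C^2 - S^2)]]"
  apply (rule matrix_inv_eq)
  using assms apply (simp_all add: vec_eq_iff forall_2 matrix_matrix_mult_def sum_2 mat_def)
  apply (auto simp: add_divide_distrib[symmetric] diff_divide_distrib[symmetric] ii power2_eq_square)
  done

lemma setup_facts:
  fixes \<theta> :: real
  assumes "cos \<theta> \<noteq> 0"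
  defines "C \<equiv> complex_of_real (cos (\<theta>/2))" and "S \<equiv> complex_of_real (sin (\<theta>/2))"
    and "w \<equiv> complex_of_real (cos \<theta>)" and "r \<equiv> complex_of_real (1 / sqrt 2)"
  shows "T_mat \<theta> = vector[vector[C, \<i> * S], vector[- \<i> * S, C]]"
    "matrix_inv (T_mat \<theta>) = vector[vector[C/w, - \<i> * S/w], vector[\<i> * S/w, C/w]]"
    "cnj C = C" "cnj S = S" "cnj w = w" "cnj r = r" "w \<noteq> 0" "w = C^2 - S^2" "C^2 + S^2 = 1"
    "2 * (r * r) = 1" "complex_of_real (sin \<theta>) = 2 * C * S"
proof -
  show T: "T_mat \<theta> = vector[vector[C, \<i> * S], vector[- \<i> * S, C]]" unfolding C_def S_def by (rule T_eq)
  show w: "w = C^2 - S^2" "C^2 + S^2 = 1" "complex_of_real (sin \<theta>) = 2 * C * S"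
    unfolding w_def C_def S_def by (rule cplx_ids)+
  show "w \<noteq> 0" unfolding w_def using assms by simp
  then show "matrix_inv (T_mat \<theta>) = vector[vector[C/w, - \<i> * S/w], vector[\<i> * S/w, C/w]]"
    unfolding T w(1) by (rule inv_abs)
  show "cnj C = C" "cnj S = S" "cnj w = w" "cnj r = r" unfolding C_def S_def w_def r_def by simp_all
  have "2 * ((1 / sqrt 2) * (1 / sqrt 2)) = (1::real)" by simp
  then have "complex_of_real (2 * ((1 / sqrt 2) * (1 / sqrt 2))) = 1" by simp
  then show "2 * (r * r) = 1" unfolding r_def by (simp only: of_real_mult of_real_numeral)
qed

lemma sig1:
  assumes "cos \<theta> \<noteq> 0"
  shows "sigma_gamma \<theta> 1 = vector[vector[\<i> * complex_of_real (sin \<theta>) / 2, 1/2], vector[1/2, - \<i> * complex_of_real (sin \<theta>) / 2]]"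
proof -
  define C where "C \<equiv> complex_of_real (cos (\<theta>/2))"
  define S where "S \<equiv> complex_of_real (sin (\<theta>/2))"
  define w where "w \<equiv> complex_of_real (cos \<theta>)"
  define r where "r \<equiv> complex_of_real (1 / sqrt 2)"
  note F = setup_facts[OF assms, folded C_def S_def w_def r_def]
  have U: "u_vec j = (if j = 1 then vector[r, r] else vector[r, -r])" for j
    unfolding u_vec_def r_def by simp
  show ?thesis
    unfolding sigma_gamma_def phi_vec_def chi_vec_def F(2) unfolding F(1,11) U w_def[symmetric]
    apply (simp add: conj_transpose_def ket_bra_def cmat_scale_def coef_def c1_def c2_def c3_def kdelta_def
      vec_eq_iff forall_2 matrix_vector_mult_def sum_2 F(3-6))
    apply (intro conjI)
    apply (simp_all add: field_simps F(7))
    using F(8-10) i_squared by algebra+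
qed
lemma sig2:
  assumes "cos \<theta> \<noteq> 0"
  shows "sigma_gamma \<theta> 2 = vector[vector[0, - \<i> / 2], vector[\<i> / 2, 0]]"
proof -
  define C where "C \<equiv> complex_of_real (cos (\<theta>/2))"
  define S where "S \<equiv> complex_of_real (sin (\<theta>/2))"
  define w where "w \<equiv> complex_of_real (cos \<theta>)"
  define r where "r \<equiv> complex_of_real (1 / sqrt 2)"
  note F = setup_facts[OF assms, folded C_def S_def w_def r_def]
  have U: "u_vec j = (if j = 1 then vector[r, r] else vector[r, -r])" for j
    unfolding u_vec_def r_def by simp
  show ?thesis
    unfolding sigma_gamma_def phi_vec_def chi_vec_def F(2) unfolding F(1,11) U w_def[symmetric]
    apply (simp add: conj_transpose_def ket_bra_def cmat_scale_def coef_def c1_def c2_def c3_def kdelta_def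
      vec_eq_iff forall_2 matrix_vector_mult_def sum_2 F(3-6))
    apply (intro conjI)
    apply (simp_all add: field_simps F(7))
    using F(8-10) i_squared by algebra+
qed
lemma sig3:
  assumes "cos \<theta> \<noteq> 0"
  shows "sigma_gamma \<theta> 3 = vector[vector[1/2, - \<i> * complex_of_real (sin \<theta>) / 2], vector[- \<i> * complex_of_real (sin \<theta>) / 2, - 1/2]]"
proof -
  define C where "C \<equiv> complex_of_real (cos (\<theta>/2))"
  define S where "S \<equiv> complex_of_real (sin (\<theta>/2))"
  define w where "w \<equiv> complex_of_real (cos \<theta>)"
  define r where "r \<equiv> complex_of_real (1 / sqrt 2)"
  note F = setup_facts[OF assms, folded C_def S_def w_def r_def]
  have U: "u_vec j = (if j = 1 then vector[r, r] else vector[r, -r])" for j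
    unfolding u_vec_def r_def by simp
  show ?thesis
    unfolding sigma_gamma_def phi_vec_def chi_vec_def F(2) unfolding F(1,11) U w_def[symmetric]
    apply (simp add: conj_transpose_def ket_bra_def cmat_scale_def coef_def c1_def c2_def c3_def kdelta_def
      vec_eq_iff forall_2 matrix_vector_mult_def sum_2 F(3-6))
    apply (intro conjI)
    apply (simp_all add: field_simps F(7))
    using F(8-10) i_squared by algebra+
qed
lemma iix: "\<i> * x * \<i> = - x" "\<i> * (x * \<i>) = - x" for x :: complex
  using i_squared by algebra+

lemma sum123: "(\<Sum>n\<in>{1,2,3::nat}. f n) = f 1 + f 2 + f 3"
  by (simp add: add.assoc)

theorem mainTheorem2:
  fixes \<theta> :: real and l m :: nat
  assumes "cos \<theta> \<noteq> 0"
    and "l \<in> {1,2,3}" and "m \<in> {1,2,3}"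
  shows "commutator (sigma_gamma \<theta> l) (sigma_gamma \<theta> m) =
    cmat_scale \<i> (\<Sum>n\<in>{1,2,3::nat}.
      cmat_scale (levi_civita l m n * (1 - complex_of_real ((sin \<theta>)\<^sup>2) * kdelta n 2))
        (sigma_gamma \<theta> n))"
  using assms(2,3)
  apply (simp only: insert_iff empty_iff)
  apply (elim disjE)
  apply (simp_all only: sig1[OF assms(1)] sig2[OF assms(1)] sig3[OF assms(1)] sum123)
  apply (simp_all add: commutator_def
     levi_civita_def kdelta_def cmat_scale_def vec_eq_iff forall_2 matrix_matrix_mult_def sum_2)
  apply safe
  apply (simp_all add: iix)
  apply (simp_all add: field_simps power2_eq_square)
  done

end
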